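(* Let $n\ge 3$, let $w$ be the solution of \[ w''+\frac{n-1}{t}w'+e^{w}=0,\qquad w(0)=0,\quad w'(0)=0 \qquad (t>0), \] and let $w_0(t)=\ln(2n-4)-2\ln t$. Set $\lambda(t)=t^2e^{w(t)}$. (i) If $w$ and $w_0$ intersect infinitely many times on $(0,\infty)$, then the solution curve of the Gelfand problem makes infinitely many turns, i.e. $\lambda'(t)$ changes sign infinitely many times on $(0,\infty)$. (ii) Suppose $w$ and $w_0$ intersect only finitely many times, and $T$ is a point after the last intersection such that $(w-w_0)'(t)$ is of one sign for $t>T$. Then $\lambda(t)$ is monotone for $t>T$.
   Context: The Gelfand problem is $u''+\frac{n-1}{r}u'+\lambda e^u=0$ for $0<r<1$, $u'(0)=u(1)=0$. The solution $w$ is defined for all $t>0$. The function $w_0$ also solves the differential equation satisfied by $w$. The solution curve of the Gelfand problem is $t\mapsto(\lambda,u(0))=(t^2e^{w(t)},-w(t))$, $t\in(0,\infty)$; for each $t$, $u(r)=w(tr)-w(t)$ is the solution at $\lambda=\lambda(t)$. A turn is a change of sign of $\lambda'(t)$. *)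

theory Defs
  imports "HOL-Analysis.Analysis"
begin

definition w0 :: "nat \<Rightarrow> real \<Rightarrow> real" where
  "w0 n t = ln (2 * real n - 4) - 2 * ln t"

definition gelfand_lambda :: "(real \<Rightarrow> real) \<Rightarrow> real \<Rightarrow> real" where
  "gelfand_lambda w t = t^2 * exp (w t)"

definition changes_sign_infinitely_often :: "(real \<Rightarrow> real) \<Rightarrow> bool" where
  "changes_sign_infinitely_often f \<longleftrightarrow>
     (\<exists>s :: nat \<Rightarrow> real. strict_mono s \<and> (\<forall>k. 0 < s k \<and> f (s k) * f (s (Suc k)) < 0))"

end

theory Submission
  imports Defs
begin

lemma sign_seq:
  fixes f :: "real \<Rightarrow> real"
  assumes pos: "\<And>M. \<exists>t>M. f t > 0" and neg: "\<And>M. \<exists>t>M. f t < 0"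
  shows "changes_sign_infinitely_often f"
proof -
  define P where "P = (\<lambda>k::nat. \<lambda>t. (even k \<longrightarrow> f t > 0) \<and> (odd k \<longrightarrow> f t < 0))"
  have ex: "\<exists>t. t > M \<and> P k t" for M k
    using pos[of M] neg[of M] unfolding P_def by (cases "even k") auto
  define s where "s = rec_nat (SOME t. t > 0 \<and> P 0 t) (\<lambda>k x. SOME t. t > x \<and> P (Suc k) t)"
  have e0: "s 0 = (SOME t. t > 0 \<and> P 0 t)" by (simp add: s_def)
  have eS: "s (Suc k) = (SOME t. t > s k \<and> P (Suc k) t)" for k by (simp add: s_def)
  have s0: "s 0 > 0 \<and> P 0 (s 0)"
    unfolding e0 by (rule someI_ex[OF ex])
  have sS: "s (Suc k) > s k \<and> P (Suc k) (s (Suc k))" for k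
    unfolding eS by (rule someI_ex[OF ex])
  have Pk: "P k (s k)" for k using s0 sS by (cases k) auto
  have spos: "s k > 0" for k
  proof (induction k)
    case 0 then show ?case using s0 by simp
  next
    case (Suc k) then show ?case using sS[of k] by simp
  qed
  have sm: "strict_mono s" using sS by (simp add: strict_mono_Suc_iff)
  have "f (s k) * f (s (Suc k)) < 0" for k
  proof (cases "even k")
    case True
    then have "f (s k) > 0" "f (s (Suc k)) < 0" using Pk[of k] Pk[of "Suc k"] unfolding P_def by auto
    then show ?thesis by (simp add: mult_pos_neg)
  next
    case False
    then have "f (s k) < 0" "f (s (Suc k)) > 0" using Pk[of k] Pk[of "Suc k"] unfolding P_def by auto
    then show ?thesis by (simp add: mult_neg_pos)
  qed
  then show ?thesis unfolding changes_sign_infinitely_often_def using sm spos by blast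
qed

theorem lemma3p1:
  fixes n :: nat and w w' w'' :: "real \<Rightarrow> real"
  assumes n3: "n \<ge> 3"
    and w_deriv: "\<And>t. t \<ge> 0 \<Longrightarrow> (w has_real_derivative w' t) (at t within {0..})"
    and w'_deriv: "\<And>t. t > 0 \<Longrightarrow> (w' has_real_derivative w'' t) (at t)"
    and ode: "\<And>t. t > 0 \<Longrightarrow> w'' t + (real n - 1) / t * w' t + exp (w t) = 0"
    and init0: "w 0 = 0"
    and init1: "w' 0 = 0"
  shows
    "(infinite {t. 0 < t \<and> w t = w0 n t} \<longrightarrow>
        changes_sign_infinitely_often (\<lambda>t. deriv (gelfand_lambda w) t))
     \<and>
     (\<forall>T. finite {t. 0 < t \<and> w t = w0 n t}
          \<and> 0 < T \<and> (\<forall>t. 0 < t \<and> w t = w0 n t \<longrightarrow> t \<le> T)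
          \<and> ((\<forall>t>T. deriv (\<lambda>s. w s - w0 n s) t \<ge> 0) \<or> (\<forall>t>T. deriv (\<lambda>s. w s - w0 n s) t \<le> 0))
        \<longrightarrow> mono_on {T<..} (gelfand_lambda w) \<or> antimono_on {T<..} (gelfand_lambda w))"
proof -
  define c where "c = 2 * real n - 4"
  have c_pos: "c > 0" using n3 unfolding c_def by simp
  define m where "m = 2*n - 4"
  have m_eq: "real m = c" using n3 unfolding m_def c_def by (simp add: of_nat_diff)
  have m2: "m \<ge> 2" using n3 unfolding m_def by simp
  define v where "v = (\<lambda>s. w s - w0 n s)"
  define v' where "v' = (\<lambda>t. w' t + 2 / t)"
  define v'' where "v'' = (\<lambda>t. w'' t - 2 / t^2)"
  have wd: "(w has_real_derivative w' t) (at t)" if "t > 0" for t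
  proof -
    have "(w has_real_derivative w' t) (at t within {0<..})"
      using that by (intro DERIV_subset[OF w_deriv[of t]]) auto
    moreover have "at t within {0<..} = at t" using that by (intro at_within_open) auto
    ultimately show ?thesis by simp
  qed
  have vd: "(v has_real_derivative v' t) (at t)" if "t > 0" for t
    unfolding v_def v'_def w0_def
    using that wd[OF that] by (auto intro!: derivative_eq_intros simp: field_simps)
  have v'd: "(v' has_real_derivative v'' t) (at t)" if "t > 0" for t
    unfolding v'_def v''_def using that w'_deriv[OF that]
    by (auto intro!: derivative_eq_intros simp: power2_eq_square field_simps)
  have expv: "exp (v t) = exp (w t) * t^2 / c" if "t>0" for t
  proof -
    have "exp (w0 n t) = c / t^2"
      unfolding w0_def c_def[symmetric] using that c_pos
      by (simp add: exp_diff exp_of_nat_mult[of 2, simplified])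
    then show ?thesis unfolding v_def by (simp add: exp_diff)
  qed
  have key: "t^2 * v'' t + (real n - 1) * t * v' t + c * (exp (v t) - 1) = 0" if "t > 0" for t
  proof -
    have "w'' t = - ((real n - 1) / t * w' t) - exp (w t)" using ode[OF that] by linarith
    have a: "t^2 * v'' t = t^2 * w'' t - 2" unfolding v''_def using that by (simp add: field_simps)
    have b: "(real n - 1) * t * v' t = (real n - 1) * t * w' t + 2 * (real n - 1)"
      unfolding v'_def using that by (simp add: field_simps)
    have d: "c * (exp (v t) - 1) = exp (w t) * t^2 - c" unfolding expv[OF that] using c_pos by (simp add: field_simps)
    have e: "t^2 * w'' t = - ((real n - 1) * t * w' t) - exp (w t) * t^2"
      unfolding \<open>w'' t = _\<close> using that by (simp add: field_simps power2_eq_square)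
    show ?thesis unfolding a b d using e unfolding c_def by simp
  qed
  define E where "E = (\<lambda>t. (t * v' t)^2 / 2 + c * (exp (v t) - 1 - v t))"
  define F where "F = (\<lambda>t. t^m * E t)"
  define E' where "E' = (\<lambda>t. (t * v' t) * (v' t + t * v'' t) + c * (exp (v t) - 1) * v' t)"
  have Ed: "(E has_real_derivative E' t) (at t)" if "t > 0" for t
    unfolding E_def E'_def using vd[OF that] v'd[OF that]
    by (auto intro!: derivative_eq_intros simp: algebra_simps power2_eq_square)
  have Fd: "(F has_real_derivative (real m * t^(m-1) * E t + t^m * E' t)) (at t)" if "t > 0" for t
    unfolding F_def using Ed[OF that]
    by (auto intro!: derivative_eq_intros simp: algebra_simps)
  have Fd_nonneg: "real m * t^(m-1) * E t + t^m * E' t \<ge> 0" if "t > 0" for t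
  proof -
    have tm: "t^m = t^(m-1) * t" using m2 by (metis Suc_diff_1 less_le_trans pos2 power_Suc2)
    have k: "t^2 * v'' t = - ((real n - 1) * t * v' t) - c * (exp (v t) - 1)" using key[OF that] by linarith
    have "t * E' t = (t * v' t) * (t * v' t) + (t * v' t) * (t^2 * v'' t) + c * (exp (v t) - 1) * (t * v' t)"
      unfolding E'_def by (simp add: algebra_simps power2_eq_square)
    also have "\<dots> = - (real n - 2) * (t * v' t)^2"
      unfolding k by (simp add: algebra_simps power2_eq_square)
    finally have tE: "t * E' t = - (real n - 2) * (t * v' t)^2" .
    have "real m * E t + t * E' t = real m * c * (exp (v t) - 1 - v t)"
      unfolding tE E_def m_eq unfolding c_def by (simp add: field_simps)
    moreover have "exp (v t) - 1 - v t \<ge> 0" using exp_ge_add_one_self[of "v t"] by linarith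
    ultimately have "real m * E t + t * E' t \<ge> 0" using c_pos m_eq by simp
    moreover have "real m * t^(m-1) * E t + t^m * E' t = t^(m-1) * (real m * E t + t * E' t)"
      unfolding tm by (simp add: algebra_simps)
    ultimately show ?thesis using that by simp
  qed
  have Fmono: "F a \<le> F b" if "0 < a" "a \<le> b" for a b
  proof (rule DERIV_nonneg_imp_nondecreasing[OF that(2)])
    fix x assume "a \<le> x" "x \<le> b"
    then have "x > 0" using that by simp
    then show "\<exists>y. (F has_real_derivative y) (at x) \<and> 0 \<le> y" using Fd Fd_nonneg by blast
  qed
  obtain d where d: "d > 0" "\<And>s. s \<in> {0..} \<Longrightarrow> dist s 0 < d \<Longrightarrow> dist (w s) (w 0) < 1"
    using DERIV_continuous[OF w_deriv[of 0]] unfolding continuous_within_eps_delta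
    by (meson zero_less_one order_refl)
  define \<delta> where "\<delta> = min d (exp (- (\<bar>ln c\<bar> + 1) / 2))"
  have \<delta>pos: "\<delta> > 0" unfolding \<delta>_def using d by simp
  have vneg: "v t < 0" if "0 < t" "t < \<delta>" for t
  proof -
    have "\<bar>w t\<bar> < 1" using d(2)[of t] that init0 unfolding \<delta>_def by (simp add: dist_real_def)
    have "ln t < ln (exp (- (\<bar>ln c\<bar> + 1) / 2))" using that unfolding \<delta>_def by (subst ln_less_cancel_iff) auto
    then have "ln t < - (\<bar>ln c\<bar> + 1) / 2" by simp
    moreover have "- ln c \<le> \<bar>ln c\<bar>" by simp
    moreover have "w t < 1" using \<open>\<bar>w t\<bar> < 1\<close> by simp
    ultimately show ?thesis unfolding v_def w0_def c_def[symmetric] by argo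
  qed
  have Epos: "E t > 0" if "t > 0" for t
  proof -
    define t1 where "t1 = min t \<delta> / 2"
    have t1: "0 < t1" "t1 < \<delta>" "t1 \<le> t" unfolding t1_def using that \<delta>pos by auto
    have "v t1 < 0" using vneg t1 by simp
    then have "exp (v t1) - 1 - v t1 > 0" using exp_minus_greater[of "- v t1"] by simp
    then have "E t1 > 0" unfolding E_def using c_pos by (simp add: add_nonneg_pos)
    then have "F t1 > 0" unfolding F_def using t1 by simp
    also have "F t1 \<le> F t" using Fmono t1 by simp
    finally show ?thesis unfolding F_def using that by (simp add: zero_less_mult_iff)
  qed
  have zero_deriv: "v' t \<noteq> 0" if "t > 0" "v t = 0" for t
    using Epos[OF that(1)] that unfolding E_def by auto
  have gl: "gelfand_lambda w = (\<lambda>t. t^2 * exp (w t))" by (rule ext) (simp add: gelfand_lambda_def)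
  have ld: "(gelfand_lambda w has_real_derivative t^2 * exp (w t) * v' t) (at t)" if "t > 0" for t
    unfolding gl v'_def using wd[OF that] that
    by (auto intro!: derivative_eq_intros simp: field_simps power2_eq_square)
  have dl: "deriv (gelfand_lambda w) t = t^2 * exp (w t) * v' t" if "t > 0" for t
    using ld[OF that] by (rule DERIV_imp_deriv)
  have dv: "deriv (\<lambda>s. w s - w0 n s) t = v' t" if "t > 0" for t
    using vd[OF that] unfolding v_def by (rule DERIV_imp_deriv)
  have part2: "\<forall>T. finite {t. 0 < t \<and> w t = w0 n t}
          \<and> 0 < T \<and> (\<forall>t. 0 < t \<and> w t = w0 n t \<longrightarrow> t \<le> T)
          \<and> ((\<forall>t>T. deriv (\<lambda>s. w s - w0 n s) t \<ge> 0) \<or> (\<forall>t>T. deriv (\<lambda>s. w s - w0 n s) t \<le> 0))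
        \<longrightarrow> mono_on {T<..} (gelfand_lambda w) \<or> antimono_on {T<..} (gelfand_lambda w)"
  proof (intro allI impI)
    fix T
    assume H: "finite {t. 0 < t \<and> w t = w0 n t}
          \<and> 0 < T \<and> (\<forall>t. 0 < t \<and> w t = w0 n t \<longrightarrow> t \<le> T)
          \<and> ((\<forall>t>T. deriv (\<lambda>s. w s - w0 n s) t \<ge> 0) \<or> (\<forall>t>T. deriv (\<lambda>s. w s - w0 n s) t \<le> 0))"
    then have T0: "0 < T" by blast
    have AB: "(\<forall>t>T. v' t \<ge> 0) \<or> (\<forall>t>T. v' t \<le> 0)"
      using H dv T0 by (metis less_trans)
    then show "mono_on {T<..} (gelfand_lambda w) \<or> antimono_on {T<..} (gelfand_lambda w)"
    proof
      assume A: "\<forall>t>T. v' t \<ge> 0"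
      have "mono_on {T<..} (gelfand_lambda w)"
      proof (rule monotone_onI)
        fix r s assume rs: "r \<in> {T<..}" "s \<in> {T<..}" "r \<le> s"
        show "gelfand_lambda w r \<le> gelfand_lambda w s"
        proof (rule DERIV_nonneg_imp_nondecreasing[OF rs(3)])
          fix x assume "r \<le> x" "x \<le> s"
          then have x: "x > T" "x > 0" using rs T0 by auto
          show "\<exists>y. (gelfand_lambda w has_real_derivative y) (at x) \<and> 0 \<le> y"
            using ld[OF x(2)] A x(1) by (intro exI[of _ "x^2 * exp (w x) * v' x"]) simp
        qed
      qed
      then show ?thesis by blast
    next
      assume A: "\<forall>t>T. v' t \<le> 0"
      have "antimono_on {T<..} (gelfand_lambda w)"
      proof (rule monotone_onI)
        fix r s assume rs: "r \<in> {T<..}" "s \<in> {T<..}" "r \<le> s"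
        show "gelfand_lambda w s \<le> gelfand_lambda w r"
        proof (rule DERIV_nonpos_imp_nonincreasing[OF rs(3)])
          fix x assume "r \<le> x" "x \<le> s"
          then have x: "x > T" "x > 0" using rs T0 by auto
          show "\<exists>y. (gelfand_lambda w has_real_derivative y) (at x) \<and> y \<le> 0"
            using ld[OF x(2)] A x(1) by (intro exI[of _ "x^2 * exp (w x) * v' x"])
              (simp add: mult_nonneg_nonpos)
        qed
      qed
      then show ?thesis by blast
    qed
  qed
  define Z where "Z = {t. 0 < t \<and> w t = w0 n t}"
  have Zv: "t \<in> Z \<longleftrightarrow> t > 0 \<and> v t = 0" for t unfolding Z_def v_def by auto
  have vcont: "continuous_on {\<delta>..M} v" for M
  proof (intro continuous_at_imp_continuous_on ballI)
    fix x assume "x \<in> {\<delta>..M}"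
    then have "x > 0" using \<delta>pos by simp
    then show "isCont v x" using vd DERIV_isCont by blast
  qed
  have finM: "finite {t\<in>Z. t \<le> M}" for M
  proof (rule ccontr)
    assume inf: "infinite {t\<in>Z. t \<le> M}"
    define S where "S = {t\<in>{\<delta>..M}. v t = 0}"
    have sub: "{t\<in>Z. t \<le> M} \<subseteq> S"
    proof
      fix t assume "t \<in> {t\<in>Z. t \<le> M}"
      then have "t > 0" "v t = 0" "t \<le> M" using Zv by auto
      moreover have "t \<ge> \<delta>" using vneg[of t] \<open>t > 0\<close> \<open>v t = 0\<close> by force
      ultimately show "t \<in> S" unfolding S_def by auto
    qed
    have infS: "infinite S" using inf sub finite_subset by blast
    have bS: "bounded S" unfolding S_def by (rule bounded_subset[of "{\<delta>..M}"]) auto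
    have cS: "closed S" unfolding S_def by (rule continuous_closed_preimage_constant[OF vcont]) simp
    obtain x where x: "x islimpt S" using bounded_infinite_imp_islimpt[OF order_refl bS infS] by blast
    have xS: "x \<in> S" using x cS closed_limpt by blast
    then have x0: "x > 0" "v x = 0" unfolding S_def using \<delta>pos by auto
    have nz: "v' x \<noteq> 0" using zero_deriv x0 by blast
    have "\<exists>e>0. \<forall>h. 0 < h \<and> h < e \<longrightarrow> v (x + h) \<noteq> 0 \<and> v (x - h) \<noteq> 0"
    proof (cases "v' x > 0")
      case True
      obtain d1 where d1: "d1 > 0" "\<forall>h>0. h < d1 \<longrightarrow> v x < v (x + h)"
        using DERIV_pos_inc_right[OF vd[OF x0(1)] True] by blast
      obtain d2 where d2: "d2 > 0" "\<forall>h>0. h < d2 \<longrightarrow> v (x - h) < v x"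
        using DERIV_pos_inc_left[OF vd[OF x0(1)] True] by blast
      show ?thesis using d1 d2 x0 by (intro exI[of _ "min d1 d2"]) auto
    next
      case False
      then have F: "v' x < 0" using nz by simp
      obtain d1 where d1: "d1 > 0" "\<forall>h>0. h < d1 \<longrightarrow> v x > v (x + h)"
        using DERIV_neg_dec_right[OF vd[OF x0(1)] F] by blast
      obtain d2 where d2: "d2 > 0" "\<forall>h>0. h < d2 \<longrightarrow> v (x - h) > v x"
        using DERIV_neg_dec_left[OF vd[OF x0(1)] F] by blast
      show ?thesis using d1 d2 x0 by (intro exI[of _ "min d1 d2"]) auto
    qed
    then obtain e where e: "e > 0" "\<And>h. 0 < h \<Longrightarrow> h < e \<Longrightarrow> v (x + h) \<noteq> 0 \<and> v (x - h) \<noteq> 0"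
      by blast
    obtain y where y: "y \<in> S" "y \<noteq> x" "dist y x < e"
      using x e(1) unfolding islimpt_approachable by blast
    have vy: "v y = 0" using y(1) unfolding S_def by simp
    show False
    proof (cases "y > x")
      case True
      then show False using e(2)[of "y - x"] y(3) vy by (auto simp: dist_real_def)
    next
      case False
      then have "y < x" using y(2) by simp
      then show False using e(2)[of "x - y"] y(3) vy by (auto simp: dist_real_def)
    qed
  qed
  have part1: "infinite Z \<longrightarrow> changes_sign_infinitely_often (\<lambda>t. deriv (gelfand_lambda w) t)"
  proof
    assume infZ: "infinite Z"
    have big: "\<exists>z\<in>Z. z > M" for M
    proof (rule ccontr)
      assume "\<not> ?thesis"
      then have "Z = {t\<in>Z. t \<le> M}" by force
      then show False using infZ finM[of M] by simp
    qed
    have signs: "(\<exists>t>M. v' t > 0) \<and> (\<exists>t>M. v' t < 0)" if M0: "M \<ge> 0" for M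
    proof -
      obtain z1 where z1: "z1 \<in> Z" "z1 > M" using big by blast
      obtain z2 where z2: "z2 \<in> Z" "z2 > z1" using big by blast
      have z1v: "z1 > 0" "v z1 = 0" using z1 Zv by auto
      have z2v: "z2 > 0" "v z2 = 0" using z2 Zv by auto
      have nz: "v' z1 \<noteq> 0" using zero_deriv z1v by blast
      have mvt: "\<exists>\<xi>. p < \<xi> \<and> \<xi> < z2 \<and> v z2 - v p = (z2 - p) * v' \<xi>" if "z1 < p" "p < z2" for p
        by (rule MVT2[OF that(2)]) (use vd that z1v in force)
      show ?thesis
      proof (cases "v' z1 > 0")
        case True
        obtain d where d: "d > 0" "\<forall>h>0. h < d \<longrightarrow> v z1 < v (z1 + h)"
          using DERIV_pos_inc_right[OF vd[OF z1v(1)] True] by blast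
        define p where "p = z1 + min d (z2 - z1) / 2"
        have hh: "min d (z2 - z1) / 2 > 0" "min d (z2 - z1) / 2 < d" "min d (z2 - z1) / 2 < z2 - z1"
          using d(1) z2(2) by (auto simp: min_def)
        have p: "z1 < p" "p < z2" "v p > 0" using d hh z1v unfolding p_def by auto
        obtain \<xi> where xi: "p < \<xi>" "\<xi> < z2" "v z2 - v p = (z2 - p) * v' \<xi>" using mvt[OF p(1,2)] by blast
        have "(z2 - p) * v' \<xi> < 0" using xi(3) z2v p by simp
        then have "v' \<xi> < 0" using p(2) by (simp add: mult_less_0_iff)
        then show ?thesis using True z1 xi p by (meson less_trans)
      next
        case False
        then have Fz: "v' z1 < 0" using nz by simp
        obtain d where d: "d > 0" "\<forall>h>0. h < d \<longrightarrow> v z1 > v (z1 + h)"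
          using DERIV_neg_dec_right[OF vd[OF z1v(1)] Fz] by blast
        define p where "p = z1 + min d (z2 - z1) / 2"
        have hh: "min d (z2 - z1) / 2 > 0" "min d (z2 - z1) / 2 < d" "min d (z2 - z1) / 2 < z2 - z1"
          using d(1) z2(2) by (auto simp: min_def)
        have p: "z1 < p" "p < z2" "v p < 0" using d hh z1v unfolding p_def by auto
        obtain \<xi> where xi: "p < \<xi>" "\<xi> < z2" "v z2 - v p = (z2 - p) * v' \<xi>" using mvt[OF p(1,2)] by blast
        have "(z2 - p) * v' \<xi> > 0" using xi(3) z2v p by simp
        then have "v' \<xi> > 0" using p(2) by (simp add: zero_less_mult_iff)
        then show ?thesis using Fz z1 xi p by (meson less_trans)
      qed
    qed
    show "changes_sign_infinitely_often (\<lambda>t. deriv (gelfand_lambda w) t)"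
    proof (rule sign_seq)
      fix M :: real
      obtain t where t: "t > max M 0" "v' t > 0" using signs[of "max M 0"] by auto
      then have "t > 0" by simp
      then show "\<exists>t>M. deriv (gelfand_lambda w) t > 0" using t dl by (intro exI[of _ t]) auto
    next
      fix M :: real
      obtain t where t: "t > max M 0" "v' t < 0" using signs[of "max M 0"] by auto
      then have "t > 0" by simp
      then show "\<exists>t>M. deriv (gelfand_lambda w) t < 0" using t dl
        by (intro exI[of _ t]) (auto simp: mult_pos_neg)
    qed
  qed
  show ?thesis using part1 part2 unfolding Z_def by blast
qed

end
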